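(* Let $T$ be a Cartesian tree with root $i$, left subtree $A$ and right subtree $B$. If $A$ is nonempty then $|ng(T,i-1)|=lbl(B)+1$, and if $B$ is nonempty then $|ng(T,i)|=lbr(A)+1$.
   Context: Sequences are finite sequences of pairwise distinct integers indexed from $1$. The Cartesian tree $C(x)$ of a sequence $x$ of length $n$ is empty if $n=0$; otherwise, if $x[i]$ is the minimum of $x$, it is the binary tree with root $i$ (nodes labelled by positions), left subtree $C(x[1\ldots i-1])$ and right subtree $C(x[i+1\ldots n])$. For $1\le i\le n-1$, $\tau(x,i)$ is obtained from $x$ by exchanging $x[i]$ and $x[i+1]$. For a Cartesian tree $T$ with $n$ nodes and $1\le i\le n-1$, $ng(T,i)=\{C(\tau(x,i)) : x \text{ a sequence with } C(x)=T\}$. For a binary tree $T$, $lbl(T)=0$ if $T$ is empty and $lbl(T)=1+lbl(A)$ where $A$ is the left subtree of $T$ otherwise (number of nodes on the left branch); $lbr$ is defined symmetrically with right subtrees. *)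

theory Defs
  imports Main "HOL-Library.Tree"
begin

text \<open>Sequences are int lists (indexed from 1 in the paper; x[k] = x ! (k-1)).
  Cartesian trees are nat trees whose node labels are the (1-based) positions
  in the original sequence. cart_aux k xs builds the Cartesian tree of the
  subsequence xs whose first element sits at position k+1 of the original sequence.\<close>

lemma takeWhile_len_lt: "x \<in> set xs \<Longrightarrow> \<not> P x \<Longrightarrow> length (takeWhile P xs) < length xs"
  by (induction xs) auto

function cart_aux :: "nat \<Rightarrow> int list \<Rightarrow> nat tree" where
  "cart_aux k xs =
     (if xs = [] then Leaf
      else (let m = Min (set xs);
                L = takeWhile (\<lambda>y. y \<noteq> m) xs;
                R = tl (dropWhile (\<lambda>y. y \<noteq> m) xs);
                j = length L + 1
            in Node (cart_aux k L) (k + j) (cart_aux (k + j) R)))"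
  by pat_completeness auto
termination
proof (relation "measure (\<lambda>(k, xs). length xs)")
  show "wf (measure (\<lambda>(k, xs). length xs))" by simp
next
  fix k :: nat and xs :: "int list" and m L
  assume "xs \<noteq> []" "m = Min (set xs)" "L = takeWhile (\<lambda>y. y \<noteq> m) xs"
  then show "((k, L), k, xs) \<in> measure (\<lambda>(k, xs). length xs)"
    using takeWhile_len_lt[of "Min (set xs)" xs] by simp
next
  fix k :: nat and xs :: "int list" and m L R j
  assume "xs \<noteq> []" "m = Min (set xs)" "R = tl (dropWhile (\<lambda>y. y \<noteq> m) xs)"
  then show "((k + j, R), k, xs) \<in> measure (\<lambda>(k, xs). length xs)"
    using length_dropWhile_le[of "\<lambda>y. y \<noteq> Min (set xs)" xs]
    by (cases xs) auto
qed

definition cart :: "int list \<Rightarrow> nat tree" where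
  "cart x = cart_aux 0 x"

definition tau :: "int list \<Rightarrow> nat \<Rightarrow> int list" where
  "tau x i = x[i - 1 := x ! i, i := x ! (i - 1)]"

definition ng :: "nat tree \<Rightarrow> nat \<Rightarrow> nat tree set" where
  "ng T i = {cart (tau x i) | x. distinct x \<and> cart x = T}"

fun lbl :: "'a tree \<Rightarrow> nat" where
  "lbl Leaf = 0"
| "lbl (Node l _ r) = 1 + lbl l"

fun lbr :: "'a tree \<Rightarrow> nat" where
  "lbr Leaf = 0"
| "lbr (Node l _ r) = 1 + lbr r"

end

theory Submission
  imports Defs
begin


declare cart_aux.simps[simp del]

lemma cart_aux_Nil[simp]: "cart_aux k [] = Leaf"
  by (subst cart_aux.simps) simp

lemma cart_aux_Leaf_iff: "cart_aux k xs = Leaf \<longleftrightarrow> xs = []"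
  by (subst cart_aux.simps) (simp add: Let_def)

lemma cart_aux_split:
  assumes "\<forall>y\<in>set L. m < y" "\<forall>y\<in>set R. m < y"
  shows "cart_aux k (L @ m # R) = Node (cart_aux k L) (k + length L + 1) (cart_aux (k + length L + 1) R)"
proof -
  have mn: "Min (set (L @ m # R)) = m"
    by (rule Min_eqI) (use assms in auto)
  have nL: "m \<notin> set L" using assms by auto
  have tw: "takeWhile (\<lambda>y. y \<noteq> m) (L @ m # R) = L"
    using nL by (subst takeWhile_append2) auto
  have dw: "dropWhile (\<lambda>y. y \<noteq> m) (L @ m # R) = m # R"
    using nL by (subst dropWhile_append2) auto
  show ?thesis by (subst cart_aux.simps) (simp only: mn tw dw Let_def, simp)
qed

lemma decomp:
  assumes "distinct (xs::int list)" "xs \<noteq> []"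
  shows "\<exists>L m R. xs = L @ m # R \<and> (\<forall>y\<in>set L. m < y) \<and> (\<forall>y\<in>set R. m < y)"
proof -
  define m where "m = Min (set xs)"
  have "m \<in> set xs" using assms m_def by simp
  then obtain L R where xs: "xs = L @ m # R" by (meson split_list)
  have le: "\<forall>y\<in>set xs. m \<le> y" using m_def by simp
  have nL: "m \<notin> set L" and nR: "m \<notin> set R" using assms(1) xs by auto
  have "\<forall>y\<in>set L. m < y"
  proof
    fix y assume "y \<in> set L"
    then have "m \<le> y" "y \<noteq> m" using le xs nL by auto
    then show "m < y" by simp
  qed
  moreover have "\<forall>y\<in>set R. m < y"
  proof
    fix y assume "y \<in> set R"
    then have "m \<le> y" "y \<noteq> m" using le xs nR by auto
    then show "m < y" by simp
  qed
  ultimately show ?thesis using xs by blast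
qed

lemma cart_aux_mono:
  assumes "strict_mono (f::int\<Rightarrow>int)" "distinct xs"
  shows "cart_aux k (map f xs) = cart_aux k xs"
  using assms(2)
proof (induction "length xs" arbitrary: xs k rule: less_induct)
  case less
  show ?case
  proof (cases "xs = []")
    case False
    then obtain L m R where d: "xs = L @ m # R" "\<forall>y\<in>set L. m < y" "\<forall>y\<in>set R. m < y"
      using decomp less.prems by blast
    have fL: "\<forall>y\<in>set (map f L). f m < y" "\<forall>y\<in>set (map f R). f m < y"
      using d assms(1) by (auto dest: strict_monoD)
    have "cart_aux k (map f xs) = cart_aux k (map f L @ f m # map f R)" using d by simp
    also have "\<dots> = Node (cart_aux k (map f L)) (k + length L + 1) (cart_aux (k + length L + 1) (map f R))"
      using cart_aux_split[OF fL] by simp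
    also have "\<dots> = Node (cart_aux k L) (k + length L + 1) (cart_aux (k + length L + 1) R)"
      using less d by simp
    also have "\<dots> = cart_aux k xs" using cart_aux_split[OF d(2,3)] d(1) by simp
    finally show ?thesis .
  qed simp
qed

lemma tau_swap: "tau (P @ u # w # R) (length P + 1) = P @ w # u # R"
proof -
  have a: "(P @ u # w # R) ! (length P + 1) = w" by (simp add: nth_append)
  have b: "(P @ u # w # R) ! length P = u" by (simp add: nth_append)
  show ?thesis unfolding tau_def a b
    by (simp add: list_update_append)
qed


fun rmlast :: "'a tree \<Rightarrow> 'a tree" where
  "rmlast Leaf = Leaf"
| "rmlast (Node l v Leaf) = l"
| "rmlast (Node l v (Node rl rv rr)) = Node l v (rmlast (Node rl rv rr))"

fun rmfirst :: "'a tree \<Rightarrow> 'a tree" where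
  "rmfirst Leaf = Leaf"
| "rmfirst (Node Leaf v r) = r"
| "rmfirst (Node (Node ll lv lr) v r) = Node (rmfirst (Node ll lv lr)) v r"

fun lput :: "'a \<Rightarrow> nat \<Rightarrow> 'a tree \<Rightarrow> 'a tree" where
  "lput p 0 t = Node Leaf p t"
| "lput p (Suc d) Leaf = Node Leaf p Leaf"
| "lput p (Suc d) (Node l v r) = Node (lput p d l) v r"

fun rput :: "'a \<Rightarrow> nat \<Rightarrow> 'a tree \<Rightarrow> 'a tree" where
  "rput p 0 t = Node t p Leaf"
| "rput p (Suc d) Leaf = Node Leaf p Leaf"
| "rput p (Suc d) (Node l v r) = Node l v (rput p d r)"

lemma rmlast_Node: "r \<noteq> Leaf \<Longrightarrow> rmlast (Node l v r) = Node l v (rmlast r)"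
  by (cases r) auto

lemma rmfirst_Node: "l \<noteq> Leaf \<Longrightarrow> rmfirst (Node l v r) = Node (rmfirst l) v r"
  by (cases l) auto

lemma lput_inj: "d \<le> lbl t \<Longrightarrow> e \<le> lbl t \<Longrightarrow> lput p d t = lput p e t \<Longrightarrow> d = e"
proof (induction t arbitrary: d e)
  case Leaf then show ?case by simp
next
  case (Node l v r)
  show ?case
  proof (cases d)
    case 0
    show ?thesis
    proof (cases e)
      case (Suc e')
      then have "r = Node l v r" using Node.prems 0 by simp
      then have "size r = size (Node l v r)" by simp
      then show ?thesis by simp
    qed (simp add: 0)
  next
    case (Suc d')
    show ?thesis
    proof (cases e)
      case 0
      then have "r = Node l v r" using Node.prems Suc by simp
      then have "size r = size (Node l v r)" by simp
      then show ?thesis by simp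
    next
      case (Suc e')
      then show ?thesis using Node \<open>d = Suc d'\<close> by simp
    qed
  qed
qed

lemma rput_inj: "d \<le> lbr t \<Longrightarrow> e \<le> lbr t \<Longrightarrow> rput p d t = rput p e t \<Longrightarrow> d = e"
proof (induction t arbitrary: d e)
  case Leaf then show ?case by simp
next
  case (Node l v r)
  show ?case
  proof (cases d)
    case 0
    show ?thesis
    proof (cases e)
      case (Suc e')
      then have "l = Node l v r" using Node.prems 0 by simp
      then have "size l = size (Node l v r)" by simp
      then show ?thesis by simp
    qed (simp add: 0)
  next
    case (Suc d')
    show ?thesis
    proof (cases e)
      case 0
      then have "l = Node l v r" using Node.prems Suc by simp
      then have "size l = size (Node l v r)" by simp
      then show ?thesis by simp
    next
      case (Suc e')
      then show ?thesis using Node \<open>d = Suc d'\<close> by simp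
    qed
  qed
qed

lemma cart_aux_single: "cart_aux k [a] = Node Leaf (k + 1) Leaf"
  using cart_aux_split[of "[]" a "[]" k] by simp

lemma rmlast_snoc:
  assumes "distinct (P @ [a::int])"
  shows "cart_aux k P = rmlast (cart_aux k (P @ [a]))"
  using assms
proof (induction "length P" arbitrary: P k rule: less_induct)
  case less
  obtain L m R where d: "P @ [a] = L @ m # R" "\<forall>y\<in>set L. m < y" "\<forall>y\<in>set R. m < y"
    using decomp[OF less.prems] by blast
  have c: "cart_aux k (P @ [a]) = Node (cart_aux k L) (k + length L + 1) (cart_aux (k + length L + 1) R)"
    using cart_aux_split[OF d(2,3)] d(1) by simp
  show ?case
  proof (cases "R = []")
    case True
    then have "L = P" using d(1) by simp
    then show ?thesis using c True by simp
  next
    case False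
    then obtain R0 a' where R: "R = R0 @ [a']" by (metis rev_exhaust)
    have "P @ [a] = (L @ m # R0) @ [a']" using d(1) R by simp
    then have P: "P = L @ m # R0" and a: "a' = a" by simp_all
    have dr: "distinct (R0 @ [a])" using less.prems P by simp
    have "cart_aux (k + length L + 1) R0 = rmlast (cart_aux (k + length L + 1) (R0 @ [a]))"
      using less.hyps[OF _ dr] P by simp
    moreover have nl: "cart_aux (k + length L + 1) (R0 @ [a]) \<noteq> Leaf"
      by (simp add: cart_aux_Leaf_iff)
    moreover have "\<forall>y\<in>set R0. m < y" using d(3) R by simp
    ultimately show ?thesis using c R a P cart_aux_split[OF d(2), of R0 k] rmlast_Node[OF nl] by simp
  qed
qed

lemma rmfirst_cons:
  assumes "distinct ((b::int) # R)"
  shows "cart_aux (k + 1) R = rmfirst (cart_aux k (b # R))"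
  using assms
proof (induction "length R" arbitrary: R k rule: less_induct)
  case less
  obtain L m R2 where d: "b # R = L @ m # R2" "\<forall>y\<in>set L. m < y" "\<forall>y\<in>set R2. m < y"
    using decomp[OF less.prems] by blast
  have c: "cart_aux k (b # R) = Node (cart_aux k L) (k + length L + 1) (cart_aux (k + length L + 1) R2)"
    using cart_aux_split[OF d(2,3)] d(1) by simp
  show ?case
  proof (cases L)
    case Nil
    then have "R2 = R" using d(1) by simp
    then show ?thesis using c Nil by simp
  next
    case (Cons b' L0)
    then have b: "b' = b" and R: "R = L0 @ m # R2" using d(1) by simp_all
    have dr: "distinct (b # L0)" using less.prems R by simp
    have "cart_aux (k + 1) L0 = rmfirst (cart_aux k (b # L0))"
      using less.hyps[OF _ dr] R by simp
    moreover have nl: "cart_aux k (b # L0) \<noteq> Leaf"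
      by (simp add: cart_aux_Leaf_iff)
    moreover have "\<forall>y\<in>set L0. m < y" using d(2) Cons by simp
    ultimately show ?thesis using c Cons b R cart_aux_split[OF _ d(3), of L0 "k+1"] rmfirst_Node[OF nl] by simp
  qed
qed

lemma LP:
  assumes "distinct ((a::int) # Q)"
  shows "\<exists>d \<le> lbl (cart_aux (k + 1) Q). cart_aux k (a # Q) = lput (k + 1) d (cart_aux (k + 1) Q)"
  using assms
proof (induction "length Q" arbitrary: Q rule: less_induct)
  case less
  obtain L m R2 where d: "a # Q = L @ m # R2" "\<forall>y\<in>set L. m < y" "\<forall>y\<in>set R2. m < y"
    using decomp[OF less.prems] by blast
  have c: "cart_aux k (a # Q) = Node (cart_aux k L) (k + length L + 1) (cart_aux (k + length L + 1) R2)"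
    using cart_aux_split[OF d(2,3)] d(1) by simp
  show ?case
  proof (cases L)
    case Nil
    then have "R2 = Q" using d(1) by simp
    then show ?thesis using c Nil by (intro exI[of _ 0]) simp
  next
    case (Cons b' L0)
    then have b: "b' = a" and R: "Q = L0 @ m # R2" using d(1) by simp_all
    have dr: "distinct (a # L0)" using less.prems R by simp
    obtain d' where d': "d' \<le> lbl (cart_aux (k + 1) L0)" "cart_aux k (a # L0) = lput (k + 1) d' (cart_aux (k + 1) L0)"
      using less.hyps[OF _ dr] R by auto
    have "\<forall>y\<in>set L0. m < y" using d(2) Cons by simp
    then have cQ: "cart_aux (k + 1) Q = Node (cart_aux (k+1) L0) (k + 1 + length L0 + 1) (cart_aux (k + 1 + length L0 + 1) R2)"
      using R cart_aux_split[OF _ d(3), of L0 "k+1"] by simp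
    show ?thesis
      by (rule exI[of _ "Suc d'"]) (use c Cons b cQ d' in simp)
  qed
qed

lemma RP:
  assumes "distinct (Q @ [b::int])"
  shows "\<exists>d \<le> lbr (cart_aux k Q). cart_aux k (Q @ [b]) = rput (k + length Q + 1) d (cart_aux k Q)"
  using assms
proof (induction "length Q" arbitrary: Q k rule: less_induct)
  case less
  obtain L m R where d: "Q @ [b] = L @ m # R" "\<forall>y\<in>set L. m < y" "\<forall>y\<in>set R. m < y"
    using decomp[OF less.prems] by blast
  have c: "cart_aux k (Q @ [b]) = Node (cart_aux k L) (k + length L + 1) (cart_aux (k + length L + 1) R)"
    using cart_aux_split[OF d(2,3)] d(1) by simp
  show ?case
  proof (cases "R = []")
    case True
    then have "L = Q" using d(1) by simp
    then show ?thesis using c True by (intro exI[of _ 0]) simp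
  next
    case False
    then obtain R0 a' where R: "R = R0 @ [a']" by (metis rev_exhaust)
    have "Q @ [b] = (L @ m # R0) @ [a']" using d(1) R by simp
    then have Q: "Q = L @ m # R0" and a: "a' = b" by simp_all
    have dr: "distinct (R0 @ [b])" using less.prems Q by simp
    obtain d' where d': "d' \<le> lbr (cart_aux (k + length L + 1) R0)"
      "cart_aux (k + length L + 1) (R0 @ [b]) = rput (k + length L + 1 + length R0 + 1) d' (cart_aux (k + length L + 1) R0)"
      using less.hyps[OF _ dr] Q by fastforce
    have "\<forall>y\<in>set R0. m < y" using d(3) R by simp
    then have cQ: "cart_aux k Q = Node (cart_aux k L) (k + length L + 1) (cart_aux (k + length L + 1) R0)"
      using Q cart_aux_split[OF d(2), of R0 k] by simp
    show ?thesis
      by (rule exI[of _ "Suc d'"]) (use c R a Q cQ d' in \<open>simp add: add.assoc\<close>)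
  qed
qed


lemma sm2: "strict_mono ((*) (2::int))"
  by (rule strict_monoI) simp

lemma sm_aff: "(0::int) < c \<Longrightarrow> strict_mono (\<lambda>v. c * v + e)"
  by (rule strict_monoI) simp

lemma EL:
  assumes "distinct Q" "\<forall>y\<in>set Q. lo < y" "d \<le> lbl (cart_aux (k + 1) Q)"
  shows "\<exists>s::int. odd s \<and> 2 * lo < s \<and> cart_aux k (s # map ((*) 2) Q) = lput (k + 1) d (cart_aux (k + 1) Q)"
  using assms
proof (induction "length Q" arbitrary: Q lo d rule: less_induct)
  case less
  show ?case
  proof (cases "Q = []")
    case True
    then show ?thesis using less.prems by (intro exI[of _ "2 * lo + 1"]) (simp add: cart_aux_single)
  next
    case False
    obtain L m R where d: "Q = L @ m # R" "\<forall>y\<in>set L. m < y" "\<forall>y\<in>set R. m < y"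
      using decomp[OF less.prems(1) False] by blast
    have cQ: "cart_aux (k + 1) Q = Node (cart_aux (k + 1) L) (k + 1 + length L + 1) (cart_aux (k + 1 + length L + 1) R)"
      using cart_aux_split[OF d(2,3)] d(1) by simp
    have lom: "lo < m" using less.prems(2) d(1) by simp
    have dm2: "distinct (map ((*) 2) Q)" using less.prems(1) by (simp add: distinct_map inj_on_def)
    show ?thesis
    proof (cases d)
      case 0
      have "\<forall>y\<in>set (map ((*) 2) Q). 2 * m - 1 < y"
        using d by auto
      then have "cart_aux k ((2 * m - 1) # map ((*) 2) Q) = Node Leaf (k + 1) (cart_aux (k + 1) (map ((*) 2) Q))"
        using cart_aux_split[of "[]" "2 * m - 1" "map ((*) 2) Q" k] by simp
      also have "\<dots> = lput (k + 1) d (cart_aux (k + 1) Q)"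
        using cart_aux_mono[OF sm2 less.prems(1)] 0 by simp
      finally show ?thesis using lom by (intro exI[of _ "2 * m - 1"]) simp
    next
      case (Suc d')
      have "d' \<le> lbl (cart_aux (k + 1) L)" using less.prems(3) Suc cQ by simp
      moreover have "distinct L" using less.prems(1) d(1) by simp
      ultimately obtain s where s: "odd s" "2 * m < s" "cart_aux k (s # map ((*) 2) L) = lput (k + 1) d' (cart_aux (k + 1) L)"
        using less.hyps[of L m d'] d by auto
      have e1: "\<forall>y\<in>set (s # map ((*) 2) L). 2 * m < y" using s d(2) by auto
      have e2: "\<forall>y\<in>set (map ((*) 2) R). 2 * m < y" using d(3) by auto
      have "s # map ((*) 2) Q = (s # map ((*) 2) L) @ 2 * m # map ((*) 2) R" using d(1) by simp
      then have "cart_aux k (s # map ((*) 2) Q) = Node (cart_aux k (s # map ((*) 2) L)) (k + 1 + length L + 1) (cart_aux (k + 1 + length L + 1) (map ((*) 2) R))"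
        using cart_aux_split[OF e1 e2, of k] by simp
      also have "\<dots> = Node (lput (k + 1) d' (cart_aux (k + 1) L)) (k + 1 + length L + 1) (cart_aux (k + 1 + length L + 1) R)"
        using s(3) cart_aux_mono[OF sm2] less.prems(1) d(1) by simp
      also have "\<dots> = lput (k + 1) d (cart_aux (k + 1) Q)" using cQ Suc by simp
      finally show ?thesis using s lom by (intro exI[of _ s]) simp
    qed
  qed
qed

lemma ER:
  assumes "distinct Q" "\<forall>y\<in>set Q. lo < y" "d \<le> lbr (cart_aux k Q)"
  shows "\<exists>s::int. odd s \<and> 2 * lo < s \<and> cart_aux k (map ((*) 2) Q @ [s]) = rput (k + length Q + 1) d (cart_aux k Q)"
  using assms
proof (induction "length Q" arbitrary: Q lo d k rule: less_induct)
  case less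
  show ?case
  proof (cases "Q = []")
    case True
    then show ?thesis using less.prems by (intro exI[of _ "2 * lo + 1"]) (simp add: cart_aux_single)
  next
    case False
    obtain L m R where d: "Q = L @ m # R" "\<forall>y\<in>set L. m < y" "\<forall>y\<in>set R. m < y"
      using decomp[OF less.prems(1) False] by blast
    have cQ: "cart_aux k Q = Node (cart_aux k L) (k + length L + 1) (cart_aux (k + length L + 1) R)"
      using cart_aux_split[OF d(2,3)] d(1) by simp
    have lom: "lo < m" using less.prems(2) d(1) by simp
    show ?thesis
    proof (cases d)
      case 0
      have "\<forall>y\<in>set (map ((*) 2) Q). 2 * m - 1 < y"
        using d by auto
      then have "cart_aux k (map ((*) 2) Q @ [2 * m - 1]) = Node (cart_aux k (map ((*) 2) Q)) (k + length Q + 1) Leaf"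
        using cart_aux_split[of "map ((*) 2) Q" "2 * m - 1" "[]" k] by simp
      also have "\<dots> = rput (k + length Q + 1) d (cart_aux k Q)"
        using cart_aux_mono[OF sm2 less.prems(1)] 0 by simp
      finally show ?thesis using lom by (intro exI[of _ "2 * m - 1"]) simp
    next
      case (Suc d')
      have "d' \<le> lbr (cart_aux (k + length L + 1) R)" using less.prems(3) Suc cQ by simp
      moreover have "distinct R" using less.prems(1) d(1) by simp
      ultimately obtain s where s: "odd s" "2 * m < s"
        "cart_aux (k + length L + 1) (map ((*) 2) R @ [s]) = rput (k + length L + 1 + length R + 1) d' (cart_aux (k + length L + 1) R)"
        using less.hyps[of R m d' "k + length L + 1"] d by auto
      have e1: "\<forall>y\<in>set (map ((*) 2) R @ [s]). 2 * m < y" using s d(3) by auto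
      have e2: "\<forall>y\<in>set (map ((*) 2) L). 2 * m < y" using d(2) by auto
      have "map ((*) 2) Q @ [s] = map ((*) 2) L @ 2 * m # (map ((*) 2) R @ [s])" using d(1) by simp
      then have "cart_aux k (map ((*) 2) Q @ [s]) = Node (cart_aux k (map ((*) 2) L)) (k + length L + 1) (cart_aux (k + length L + 1) (map ((*) 2) R @ [s]))"
        using cart_aux_split[OF e2 e1, of k] by simp
      also have "\<dots> = Node (cart_aux k L) (k + length L + 1) (rput (k + length L + 1 + length R + 1) d' (cart_aux (k + length L + 1) R))"
        using s(3) cart_aux_mono[OF sm2] less.prems(1) d(1) by simp
      also have "\<dots> = rput (k + length Q + 1) d (cart_aux k Q)" using cQ Suc d(1) by (simp add: add.assoc)
      finally show ?thesis using s lom by (intro exI[of _ s]) simp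
    qed
  qed
qed


lemma shape:
  assumes "distinct z" "cart z = Node A i B"
  shows "\<exists>L m R. z = L @ m # R \<and> (\<forall>y\<in>set L. m < y) \<and> (\<forall>y\<in>set R. m < y)
           \<and> A = cart_aux 0 L \<and> i = length L + 1 \<and> B = cart_aux i R"
proof -
  have "z \<noteq> []" using assms(2) by (auto simp: cart_def)
  then obtain L m R where d: "z = L @ m # R" "\<forall>y\<in>set L. m < y" "\<forall>y\<in>set R. m < y"
    using decomp[OF assms(1)] by blast
  have "cart z = Node (cart_aux 0 L) (length L + 1) (cart_aux (length L + 1) R)"
    using cart_aux_split[OF d(2,3), of 0] d(1) by (simp add: cart_def)
  then show ?thesis using assms(2) d by auto
qed

lemma lower_bound: "\<exists>m'::int. \<forall>y\<in>set W. m' < y"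
proof -
  have "\<forall>y\<in>set W. Min (insert 0 (set W)) - 1 < y"
  proof
    fix y assume "y \<in> set W"
    then have "Min (insert 0 (set W)) \<le> y" by (intro Min_le) auto
    then show "Min (insert 0 (set W)) - 1 < y" by linarith
  qed
  then show ?thesis by blast
qed

lemma odd_neq: "odd (s::int) \<Longrightarrow> 4 * p \<noteq> 4 * v + (4 * a - 2 * s)"
proof
  assume "odd s" "4 * p = 4 * v + (4 * a - 2 * s)"
  then show False by presburger
qed

lemma part1:
  assumes "distinct x" "cart x = Node A i B" "A \<noteq> Leaf"
  shows "ng (Node A i B) (i - 1) = (\<lambda>d. Node (rmlast A) (i - 1) (lput i d B)) ` {0..lbl B}"
proof
  show "ng (Node A i B) (i - 1) \<subseteq> (\<lambda>d. Node (rmlast A) (i - 1) (lput i d B)) ` {0..lbl B}"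
  proof
    fix t assume "t \<in> ng (Node A i B) (i - 1)"
    then obtain z where z: "t = cart (tau z (i - 1))" "distinct z" "cart z = Node A i B"
      unfolding ng_def by blast
    obtain L m R where d: "z = L @ m # R" "\<forall>y\<in>set L. m < y" "\<forall>y\<in>set R. m < y"
      "A = cart_aux 0 L" "i = length L + 1" "B = cart_aux i R"
      using shape[OF z(2,3)] by blast
    have "L \<noteq> []" using d(4) assms(3) by auto
    then obtain P a where L: "L = P @ [a]" by (metis rev_exhaust)
    have zz: "z = P @ a # m # R" using d(1) L by simp
    have i1: "i - 1 = length P + 1" using d(5) L by simp
    have ta: "tau z (i - 1) = P @ m # (a # R)" using tau_swap[of P a m R] zz i1 by simp
    have e1: "\<forall>y\<in>set P. m < y" "\<forall>y\<in>set (a # R). m < y" using d(2,3) L by auto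
    have ct: "t = Node (cart_aux 0 P) (length P + 1) (cart_aux (length P + 1) (a # R))"
      using z(1) ta cart_aux_split[OF e1, of 0] by (simp add: cart_def)
    have "cart_aux 0 P = rmlast A" using rmlast_snoc[of P a 0] z(2) zz d(4) L by simp
    moreover obtain dd where "dd \<le> lbl B" "cart_aux (length P + 1) (a # R) = lput i dd B"
      using LP[of a R "length P + 1"] z(2) zz d(5,6) L by auto
    ultimately show "t \<in> (\<lambda>d. Node (rmlast A) (i - 1) (lput i d B)) ` {0..lbl B}"
      using ct i1 by auto
  qed
next
  show "(\<lambda>d. Node (rmlast A) (i - 1) (lput i d B)) ` {0..lbl B} \<subseteq> ng (Node A i B) (i - 1)"
  proof
    fix t assume "t \<in> (\<lambda>d. Node (rmlast A) (i - 1) (lput i d B)) ` {0..lbl B}"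
    then obtain dd where dd: "dd \<le> lbl B" "t = Node (rmlast A) (i - 1) (lput i dd B)" by auto
    obtain L m R where d: "x = L @ m # R" "\<forall>y\<in>set L. m < y" "\<forall>y\<in>set R. m < y"
      "A = cart_aux 0 L" "i = length L + 1" "B = cart_aux i R"
      using shape[OF assms(1,2)] by blast
    have "L \<noteq> []" using d(4) assms(3) by auto
    then obtain P a where L: "L = P @ [a]" by (metis rev_exhaust)
    have xx: "x = P @ a # m # R" using d(1) L by simp
    have i1: "i - 1 = length P + 1" using d(5) L by simp
    have dR: "distinct R" using assms(1) xx by simp
    obtain s where s: "odd s" "cart_aux (length P + 1) (s # map ((*) 2) R) = lput (length P + 1 + 1) dd (cart_aux (length P + 1 + 1) R)"
      using EL[OF dR d(3), of dd "length P + 1"] dd(1) d(5,6) L by auto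
    define g where "g = (\<lambda>v::int. 4 * v + (4 * a - 2 * s))"
    obtain m' where m': "\<forall>y\<in>set (map ((*) 4) P @ (4 * a) # map g R). m' < y"
      using lower_bound by blast
    define y where "y = map ((*) 4) P @ (4 * a) # m' # map g R"
    have dP: "distinct (P @ [a])" using assms(1) xx by simp
    have inj4: "inj ((*) (4::int))" by (simp add: inj_on_def)
    have injg: "inj g" by (simp add: inj_on_def g_def)
    have disj: "\<forall>p v. 4 * p \<noteq> g v" using odd_neq[OF s(1)] g_def by simp
    have "distinct y" unfolding y_def using dP dR m' disj
      by (auto simp: distinct_map inj_on_def g_def)
    have m'1: "\<forall>y\<in>set (map ((*) 4) (P @ [a])). m' < y" "\<forall>y\<in>set (map g R). m' < y" using m' by auto
    have "y = map ((*) 4) (P @ [a]) @ m' # map g R" unfolding y_def by simp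
    then have "cart y = Node (cart_aux 0 (map ((*) 4) (P @ [a]))) (length P + 2) (cart_aux (length P + 2) (map g R))"
      using cart_aux_split[OF m'1, of 0] by (simp add: cart_def)
    also have "\<dots> = Node A i B"
      using cart_aux_mono[OF sm_aff[of 4 0] dP] cart_aux_mono[OF sm_aff[of 4 "4 * a - 2 * s"] dR]
        d(4,5,6) L by (simp add: g_def)
    finally have cy: "cart y = Node A i B" .
    have ta: "tau y (i - 1) = map ((*) 4) P @ m' # (4 * a # map g R)"
      unfolding y_def i1 using tau_swap[of "map ((*) 4) P" "4 * a" m' "map g R"] by simp
    have m'2: "\<forall>y\<in>set (map ((*) 4) P). m' < y" "\<forall>y\<in>set (4 * a # map g R). m' < y" using m' by auto
    have "cart (tau y (i - 1)) = Node (cart_aux 0 (map ((*) 4) P)) (length P + 1) (cart_aux (length P + 1) (4 * a # map g R))"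
      using ta cart_aux_split[OF m'2, of 0] by (simp add: cart_def)
    also have "cart_aux 0 (map ((*) 4) P) = rmlast A"
      using cart_aux_mono[OF sm_aff[of 4 0], of P 0] rmlast_snoc[OF dP, of 0] dP d(4) L by simp
    also have "4 * a # map g R = map (\<lambda>z. 2 * z + (4 * a - 2 * s)) (s # map ((*) 2) R)"
      by (simp add: g_def)
    also have "cart_aux (length P + 1) \<dots> = cart_aux (length P + 1) (s # map ((*) 2) R)"
    proof (rule cart_aux_mono)
      show "strict_mono (\<lambda>z. 2 * z + (4 * a - 2 * s))" by (rule sm_aff) simp
      have "s \<notin> (*) 2 ` set R" using s(1) by auto
      then show "distinct (s # map ((*) 2) R)" using dR by (simp add: distinct_map inj_on_def)
    qed
    also have "\<dots> = lput i dd B" using s(2) d(5,6) L by simp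
    finally have "cart (tau y (i - 1)) = t" using dd(2) i1 by simp
    then show "t \<in> ng (Node A i B) (i - 1)" unfolding ng_def using cy \<open>distinct y\<close> by blast
  qed
qed


lemma part2:
  assumes "distinct x" "cart x = Node A i B" "B \<noteq> Leaf"
  shows "ng (Node A i B) i = (\<lambda>d. Node (rput i d A) (i + 1) (rmfirst B)) ` {0..lbr A}"
proof
  show "ng (Node A i B) i \<subseteq> (\<lambda>d. Node (rput i d A) (i + 1) (rmfirst B)) ` {0..lbr A}"
  proof
    fix t assume "t \<in> ng (Node A i B) i"
    then obtain z where z: "t = cart (tau z i)" "distinct z" "cart z = Node A i B"
      unfolding ng_def by blast
    obtain L m R where d: "z = L @ m # R" "\<forall>y\<in>set L. m < y" "\<forall>y\<in>set R. m < y"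
      "A = cart_aux 0 L" "i = length L + 1" "B = cart_aux i R"
      using shape[OF z(2,3)] by blast
    have "R \<noteq> []" using d(6) assms(3) by auto
    then obtain b R0 where R: "R = b # R0" by (cases R) auto
    have zz: "z = L @ m # b # R0" using d(1) R by simp
    have ta: "tau z i = (L @ [b]) @ m # R0" using tau_swap[of L m b R0] zz d(5) by simp
    have e1: "\<forall>y\<in>set (L @ [b]). m < y" "\<forall>y\<in>set R0. m < y" using d(2,3) R by auto
    have ct: "t = Node (cart_aux 0 (L @ [b])) (i + 1) (cart_aux (i + 1) R0)"
      using z(1) ta cart_aux_split[OF e1, of 0] d(5) by (simp add: cart_def)
    have "cart_aux (i + 1) R0 = rmfirst B" using rmfirst_cons[of b R0 i] z(2) zz d(6) R by simp
    moreover obtain dd where "dd \<le> lbr A" "cart_aux 0 (L @ [b]) = rput i dd A"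
      using RP[of L b 0] z(2) zz d(4,5) by auto
    ultimately show "t \<in> (\<lambda>d. Node (rput i d A) (i + 1) (rmfirst B)) ` {0..lbr A}"
      using ct by auto
  qed
next
  show "(\<lambda>d. Node (rput i d A) (i + 1) (rmfirst B)) ` {0..lbr A} \<subseteq> ng (Node A i B) i"
  proof
    fix t assume "t \<in> (\<lambda>d. Node (rput i d A) (i + 1) (rmfirst B)) ` {0..lbr A}"
    then obtain dd where dd: "dd \<le> lbr A" "t = Node (rput i dd A) (i + 1) (rmfirst B)" by auto
    obtain L m R where d: "x = L @ m # R" "\<forall>y\<in>set L. m < y" "\<forall>y\<in>set R. m < y"
      "A = cart_aux 0 L" "i = length L + 1" "B = cart_aux i R"
      using shape[OF assms(1,2)] by blast
    have "R \<noteq> []" using d(6) assms(3) by auto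
    then obtain b R0 where R: "R = b # R0" by (cases R) auto
    have xx: "x = L @ m # b # R0" using d(1) R by simp
    have dL: "distinct L" using assms(1) xx by simp
    obtain s where s: "odd s" "cart_aux 0 (map ((*) 2) L @ [s]) = rput (0 + length L + 1) dd (cart_aux 0 L)"
      using ER[OF dL d(2), of dd 0] dd(1) d(4) by auto
    define g where "g = (\<lambda>v::int. 4 * v + (4 * b - 2 * s))"
    obtain m' where m': "\<forall>y\<in>set (map g L @ (4 * b) # map ((*) 4) R0). m' < y"
      using lower_bound by blast
    define y where "y = map g L @ m' # (4 * b) # map ((*) 4) R0"
    have dR: "distinct (b # R0)" using assms(1) xx by simp
    have disj: "\<forall>p v. 4 * p \<noteq> g v" using odd_neq[OF s(1)] g_def by simp
    have disj2: "\<forall>p v. g v \<noteq> 4 * p" using disj by metis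
    have "distinct y" unfolding y_def using dL dR m' disj disj2
      by (auto simp: distinct_map inj_on_def g_def)
    have m'1: "\<forall>y\<in>set (map g L). m' < y" "\<forall>y\<in>set (map ((*) 4) (b # R0)). m' < y" using m' by auto
    have "y = map g L @ m' # map ((*) 4) (b # R0)" unfolding y_def by simp
    then have "cart y = Node (cart_aux 0 (map g L)) (length L + 1) (cart_aux (length L + 1) (map ((*) 4) (b # R0)))"
      using cart_aux_split[OF m'1, of 0] by (simp add: cart_def)
    also have "\<dots> = Node A i B"
      using cart_aux_mono[OF sm_aff[of 4 0] dR] cart_aux_mono[OF sm_aff[of 4 "4 * b - 2 * s"] dL]
        d(4,5,6) R by (simp add: g_def)
    finally have cy: "cart y = Node A i B" .
    have ta: "tau y i = (map g L @ [4 * b]) @ m' # map ((*) 4) R0"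
      unfolding y_def using tau_swap[of "map g L" m' "4 * b" "map ((*) 4) R0"] d(5) by simp
    have m'2: "\<forall>y\<in>set (map g L @ [4 * b]). m' < y" "\<forall>y\<in>set (map ((*) 4) R0). m' < y" using m' by auto
    have "cart (tau y i) = Node (cart_aux 0 (map g L @ [4 * b])) (i + 1) (cart_aux (i + 1) (map ((*) 4) R0))"
      using ta cart_aux_split[OF m'2, of 0] d(5) by (simp add: cart_def)
    also have "cart_aux (i + 1) (map ((*) 4) R0) = rmfirst B"
      using cart_aux_mono[OF sm_aff[of 4 0], of R0 "i + 1"] rmfirst_cons[OF dR, of i] dR d(6) R by simp
    also have "map g L @ [4 * b] = map (\<lambda>z. 2 * z + (4 * b - 2 * s)) (map ((*) 2) L @ [s])"
      by (simp add: g_def)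
    also have "cart_aux 0 \<dots> = cart_aux 0 (map ((*) 2) L @ [s])"
    proof (rule cart_aux_mono)
      show "strict_mono (\<lambda>z. 2 * z + (4 * b - 2 * s))" by (rule sm_aff) simp
      have "s \<notin> (*) 2 ` set L" using s(1) by auto
      then show "distinct (map ((*) 2) L @ [s])" using dL by (simp add: distinct_map inj_on_def)
    qed
    also have "\<dots> = rput i dd A" using s(2) d(4,5) by simp
    finally have "cart (tau y i) = t" using dd(2) by simp
    then show "t \<in> ng (Node A i B) i" unfolding ng_def using cy \<open>distinct y\<close> by blast
  qed
qed

theorem lemma8:
  fixes x :: "int list" and A B :: "nat tree" and i :: nat
  assumes "distinct x"
    and "cart x = Node A i B"
  shows "(A \<noteq> Leaf \<longrightarrow> card (ng (Node A i B) (i - 1)) = lbl B + 1)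
       \<and> (B \<noteq> Leaf \<longrightarrow> card (ng (Node A i B) i) = lbr A + 1)"
proof (intro conjI impI)
  assume "A \<noteq> Leaf"
  have "inj_on (\<lambda>d. Node (rmlast A) (i - 1) (lput i d B)) {0..lbl B}"
    by (rule inj_onI) (auto dest: lput_inj)
  then show "card (ng (Node A i B) (i - 1)) = lbl B + 1"
    using part1[OF assms \<open>A \<noteq> Leaf\<close>] by (simp add: card_image)
next
  assume "B \<noteq> Leaf"
  have "inj_on (\<lambda>d. Node (rput i d A) (i + 1) (rmfirst B)) {0..lbr A}"
    by (rule inj_onI) (auto dest: rput_inj)
  then show "card (ng (Node A i B) i) = lbr A + 1"
    using part2[OF assms \<open>B \<noteq> Leaf\<close>] by (simp add: card_image)
qed

end
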